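(* Assume the standing assumptions and additionally that every $\sigma_l$ is differentiable everywhere, and let $\Omega=\Omega_{out}$ with $\lambda>0$, $1\le p<\infty$. Then for every $B\in\mathbb{R}$, the set of dimension tuples $\mathbf{d}=(d_1,\dots,d_{L-1})$ for which there exists a proper $B$-local minimum $(\mathbf{d},\mathbf{W})$ of $E$ is bounded.
   Context: Network: for dimensions $d_0,\dots,d_L$ and weights $\mathbf{W}=(W_1,\dots,W_L)$, $W_l\in\mathbb{R}^{d_{l-1}\times d_l}$, define for a row vector $x\in\mathbb{R}^{d_0}$: $x_0=x$, $z_l=x_{l-1}W_l$, $x_l=\sigma_l.(z_l)$ (elementwise), $f(\mathbf{W},x)=x_L$; $d_0,d_L$ are fixed and $d_1,\dots,d_{L-1}$ vary. $E(\mathbf{d},\mathbf{W})=\frac{1}{|D|}\sum_{(x,y)\in D}e(f(\mathbf{W},x),y)+\Omega(\mathbf{W},\lambda,p)$ with $D$ a finite dataset of pairs $(x,y)$, $x\in\mathbb{R}^{d_0}$, $y\in Y$. $\Omega_{in}(\mathbf{W},\lambda,p)=\lambda\sum_{l=1}^L\sum_{j=1}^{d_l}\|(W_l(i,j))_{i}\|_p$, $\Omega_{out}(\mathbf{W},\lambda,p)=\lambda\sum_{l=1}^L\sum_{i=1}^{d_{l-1}}\|(W_l(i,j))_{j}\|_p$. Standing assumptions: each $\sigma_l$ is left- and right-differentiable everywhere, and there are functions $b_{1,l},b_{2,l}:\mathbb{R}_{\ge0}\to\mathbb{R}_{\ge0}$ with $|\sigma_l(s)|\le b_{1,l}(S)|s|$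 and $|\sigma_l^{\leftarrow}(s)|,|\sigma_l^{\rightarrow}(s)|\le b_{2,l}(S)$ whenever $|s|\le S$; $e$ is nonnegative, differentiable in its first argument, and there is $b_3$ with $e(v,y)\le S\Rightarrow\|\partial e(v,y)/\partial v\|_\infty\le b_3(S)$. Definitions: The fan-in of hidden unit $j$ in layer $l$ ($1\le l\le L-1$) is column $j$ of $W_l$; its fan-out is row $j$ of $W_{l+1}$. A pair $(\mathbf{d},\mathbf{W})$ is a local minimum of $E$ if $\mathbf{W}$ is a local minimum of $E(\mathbf{d},\cdot)$ with $\mathbf{d}$ fixed; it is $B$-locally minimal if moreover $E(\mathbf{d},\mathbf{W})\le B$. The proper dimensionality of $\mathbf{W}$ is the dimension tuple obtained by deleting all hidden units whose fan-in or fan-out (or both) is the zero vector; $(\mathbf{d},\mathbf{W})$ is proper if $\mathbf{d}$ equals the proper dimensionality of $\mathbf{W}$. A proper $B$-local minimum is a $B$-locally minimal local minimum that is proper. *)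

theory Defs
  imports "HOL-Analysis.Analysis"
begin

(* L        : number of layers (layers are numbered 1..L).
   d        : nat => nat, d l = width of layer l (d 0 = input dim, d L = output dim).
   W        : nat => nat => nat => real, W l i j = entry (i,j) of W_l (0-based indices,
              i < d (l-1), j < d l); entries outside this range are required to be 0.
   sigma    : nat => real => real, sigma l = activation of layer l.
   inputs   : nat => real (only the components < d 0 are used).
   outputs  : real^'o, where d L = CARD('o); output unit j < d L corresponds to the
              coordinate (inv enum_idx j) of a fixed canonical enumeration of 'o. *)

type_synonym weights = "nat \<Rightarrow> nat \<Rightarrow> nat \<Rightarrow> real"

definition enum_idx :: "'a::finite \<Rightarrow> nat" where
  "enum_idx = (SOME f. bij_betw f (UNIV::'a set) {..<CARD('a)})"

definition valid_weights :: "nat \<Rightarrow> (nat \<Rightarrow> nat) \<Rightarrow> weights \<Rightarrow> bool" where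
  "valid_weights L d W \<longleftrightarrow>
     (\<forall>l i j. W l i j \<noteq> 0 \<longrightarrow> 1 \<le> l \<and> l \<le> L \<and> i < d (l - 1) \<and> j < d l)"

fun layer_out :: "(nat \<Rightarrow> real \<Rightarrow> real) \<Rightarrow> (nat \<Rightarrow> nat) \<Rightarrow> weights \<Rightarrow> (nat \<Rightarrow> real)
                    \<Rightarrow> nat \<Rightarrow> (nat \<Rightarrow> real)" where
  "layer_out \<sigma> d W x 0 = (\<lambda>i. if i < d 0 then x i else 0)"
| "layer_out \<sigma> d W x (Suc l) =
     (\<lambda>j. if j < d (Suc l)
          then \<sigma> (Suc l) (\<Sum>i<d l. layer_out \<sigma> d W x l i * W (Suc l) i j)
          else 0)"

definition net_out :: "(nat \<Rightarrow> real \<Rightarrow> real) \<Rightarrow> nat \<Rightarrow> (nat \<Rightarrow> nat) \<Rightarrow> weights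
                        \<Rightarrow> (nat \<Rightarrow> real) \<Rightarrow> real^'o::finite" where
  "net_out \<sigma> L d W x = (\<chi> k. layer_out \<sigma> d W x L (enum_idx k))"

text \<open>p-norm of row i of W_l (the fan-out of unit i of layer l-1).\<close>
definition row_pnorm :: "real \<Rightarrow> (nat \<Rightarrow> nat) \<Rightarrow> weights \<Rightarrow> nat \<Rightarrow> nat \<Rightarrow> real" where
  "row_pnorm p d W l i = (\<Sum>j<d l. \<bar>W l i j\<bar> powr p) powr (1 / p)"

definition Omega_out :: "real \<Rightarrow> real \<Rightarrow> nat \<Rightarrow> (nat \<Rightarrow> nat) \<Rightarrow> weights \<Rightarrow> real" where
  "Omega_out lam p L d W = lam * (\<Sum>l\<in>{1..L}. \<Sum>i<d (l - 1). row_pnorm p d W l i)"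

definition E_obj :: "(nat \<Rightarrow> real \<Rightarrow> real) \<Rightarrow> (real^'o::finite \<Rightarrow> 'y \<Rightarrow> real)
                      \<Rightarrow> ((nat \<Rightarrow> real) \<times> 'y) set \<Rightarrow> real \<Rightarrow> real \<Rightarrow> nat
                      \<Rightarrow> (nat \<Rightarrow> nat) \<Rightarrow> weights \<Rightarrow> real" where
  "E_obj \<sigma> e D lam p L d W =
     (\<Sum>(x, y)\<in>D. e (net_out \<sigma> L d W x) y) / real (card D) + Omega_out lam p L d W"

definition is_local_min :: "((nat \<Rightarrow> nat) \<Rightarrow> weights \<Rightarrow> real) \<Rightarrow> nat \<Rightarrow> (nat \<Rightarrow> nat)
                           \<Rightarrow> weights \<Rightarrow> bool" where
  "is_local_min E L d W \<longleftrightarrow> valid_weights L d W \<and>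
     (\<exists>\<epsilon>>0. \<forall>W'. valid_weights L d W' \<and> (\<forall>l i j. \<bar>W' l i j - W l i j\<bar> < \<epsilon>)
                 \<longrightarrow> E d W \<le> E d W')"

definition zero_fan_in :: "(nat \<Rightarrow> nat) \<Rightarrow> weights \<Rightarrow> nat \<Rightarrow> nat \<Rightarrow> bool" where
  "zero_fan_in d W l j \<longleftrightarrow> (\<forall>i<d (l - 1). W l i j = 0)"

definition zero_fan_out :: "(nat \<Rightarrow> nat) \<Rightarrow> weights \<Rightarrow> nat \<Rightarrow> nat \<Rightarrow> bool" where
  "zero_fan_out d W l j \<longleftrightarrow> (\<forall>k<d (l + 1). W (l + 1) j k = 0)"

definition proper_dim :: "nat \<Rightarrow> (nat \<Rightarrow> nat) \<Rightarrow> weights \<Rightarrow> nat \<Rightarrow> nat" where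
  "proper_dim L d W l =
     (if 1 \<le> l \<and> l \<le> L - 1
      then card {j. j < d l \<and> \<not> zero_fan_in d W l j \<and> \<not> zero_fan_out d W l j}
      else d l)"

definition is_proper :: "nat \<Rightarrow> (nat \<Rightarrow> nat) \<Rightarrow> weights \<Rightarrow> bool" where
  "is_proper L d W \<longleftrightarrow> (\<forall>l\<in>{0..L}. d l = proper_dim L d W l)"

definition proper_B_local_min :: "((nat \<Rightarrow> nat) \<Rightarrow> weights \<Rightarrow> real) \<Rightarrow> real \<Rightarrow> nat
                                  \<Rightarrow> (nat \<Rightarrow> nat) \<Rightarrow> weights \<Rightarrow> bool" where
  "proper_B_local_min E B L d W \<longleftrightarrow>
     is_local_min E L d W \<and> E d W \<le> B \<and> is_proper L d W"

end

theory Submission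
  imports Defs
begin


lemma vec_deriv:
  fixes g :: "'o::finite \<Rightarrow> real \<Rightarrow> real"
  assumes "\<And>k. (g k has_real_derivative u k) (at 0)"
  shows "((\<lambda>t. (\<chi> k. g k t)::real^'o) has_derivative (\<lambda>h. h *\<^sub>R (\<chi> k. u k))) (at 0)"
proof -
  have "((\<lambda>t. (\<chi> k. g k t)::real^'o) has_derivative (\<lambda>h. h *\<^sub>R (\<chi> k. u k))) (at 0 within UNIV)"
  proof (rule has_derivative_componentwise_within[THEN iffD2], rule ballI)
    fix b :: "real^'o" assume "b \<in> Basis"
    then obtain i where b: "b = axis i 1" by (auto simp: Basis_vec_def)
    have d: "((\<lambda>t. g i t) has_derivative (\<lambda>h. u i * h)) (at 0)"
      using assms[of i] by (simp add: has_field_derivative_def)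
    have eq: "(\<lambda>t. (\<chi> k. g k t) \<bullet> b) = (\<lambda>t. g i t)" by (simp add: b inner_axis)
    show "((\<lambda>t. (\<chi> k. g k t) \<bullet> b) has_derivative (\<lambda>h. (h *\<^sub>R (\<chi> k. u k)) \<bullet> b)) (at 0 within UNIV)"
      unfolding eq by (rule has_derivative_eq_rhs[OF d]) (rule ext, simp add: b inner_axis)
  qed
  then show ?thesis by simp
qed

lemma powmean:
  fixes y :: "'a \<Rightarrow> real"
  assumes A: "finite A" and y: "\<And>i. i \<in> A \<Longrightarrow> 0 \<le> y i" and p: "1 \<le> p"
  shows "sum y A \<le> real (card A) powr (1 - 1/p) * (\<Sum>i\<in>A. y i powr p) powr (1/p)"
proof -
  define P where "P = {i\<in>A. y i \<noteq> 0}"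
  have P: "finite P" "P \<subseteq> A" using A by (auto simp: P_def)
  have s1: "sum y A = sum y P"
    by (rule sum.mono_neutral_right) (use A in \<open>auto simp: P_def\<close>)
  have s2: "(\<Sum>i\<in>A. y i powr p) = (\<Sum>i\<in>P. y i powr p)"
    by (rule sum.mono_neutral_right) (use A in \<open>auto simp: P_def\<close>)
  show ?thesis
  proof (cases "P = {}")
    case True then show ?thesis by (simp add: s1)
  next
    case False
    define m where "m = real (card P)"
    have m0: "0 < m" using False P by (simp add: m_def card_gt_0_iff)
    have ypos: "\<And>i. i \<in> P \<Longrightarrow> 0 < y i" using y P by (force simp: P_def)
    have cv: "(\<Sum>i\<in>P. (1/m) *\<^sub>R y i) powr p \<le> (\<Sum>i\<in>P. (1/m) * y i powr p)"
      by (rule convex_on_sum[OF P(1) False powr_convex[OF p]])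
         (use m0 ypos in \<open>auto simp: m_def\<close>)
    have e1: "(\<Sum>i\<in>P. (1/m) *\<^sub>R y i) = sum y P / m" by (simp add: sum_divide_distrib)
    have e2: "(\<Sum>i\<in>P. (1/m) * y i powr p) = (\<Sum>i\<in>P. y i powr p) / m" by (simp add: sum_divide_distrib)
    have sp: "0 \<le> sum y P" using ypos by (simp add: sum_nonneg less_imp_le)
    have sq: "0 \<le> (\<Sum>i\<in>P. y i powr p)" by (simp add: sum_nonneg)
    have "sum y P / m = ((sum y P / m) powr p) powr (1/p)"
      using p sp m0 by (simp add: powr_powr)
    also have "\<dots> \<le> ((\<Sum>i\<in>P. y i powr p) / m) powr (1/p)"
    proof (rule powr_mono2)
      show "0 \<le> 1/p" using p by simp
      show "0 \<le> (sum y P / m) powr p" by simp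
      show "(sum y P / m) powr p \<le> (\<Sum>i\<in>P. y i powr p) / m" using cv unfolding e1 e2 .
    qed
    also have "\<dots> = (\<Sum>i\<in>P. y i powr p) powr (1/p) / m powr (1/p)"
      using sq m0 by (simp add: powr_divide)
    finally have "sum y P \<le> m * ((\<Sum>i\<in>P. y i powr p) powr (1/p) / m powr (1/p))"
      using m0 by (simp add: divide_le_eq mult.commute)
    also have "\<dots> = m powr (1 - 1/p) * (\<Sum>i\<in>P. y i powr p) powr (1/p)"
    proof -
      have "m powr (1 - 1/p) = m / m powr (1/p)" using m0 by (simp add: powr_diff)
      then show ?thesis by simp
    qed
    also have "\<dots> \<le> real (card A) powr (1 - 1/p) * (\<Sum>i\<in>P. y i powr p) powr (1/p)"
    proof (rule mult_right_mono)
      show "0 \<le> (\<Sum>i\<in>P. y i powr p) powr (1/p)" by simp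
      show "m powr (1 - 1/p) \<le> real (card A) powr (1 - 1/p)"
        by (rule powr_mono2) (use p m0 card_mono[OF A P(2)] in \<open>auto simp: m_def\<close>)
    qed
    finally show ?thesis by (simp add: s1 s2)
  qed
qed



lemma e_chain:
  fixes g :: "'o::finite \<Rightarrow> real \<Rightarrow> real" and e :: "real^'o \<Rightarrow> 'y \<Rightarrow> real"
  assumes gd: "\<And>k. (g k has_real_derivative u k) (at 0)"
    and ub: "\<And>k. \<bar>u k\<bar> \<le> U"
    and ed: "(\<lambda>w. e w y) differentiable (at (\<chi> k. g k 0))"
    and eb: "\<And>k. \<bar>frechet_derivative (\<lambda>w. e w y) (at (\<chi> k. g k 0)) (axis k 1)\<bar> \<le> c"
  shows "\<exists>D'. ((\<lambda>t. e (\<chi> k. g k t) y) has_real_derivative D') (at 0)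
             \<and> \<bar>D'\<bar> \<le> real CARD('o) * (c * U)"
proof -
  define F where "F = frechet_derivative (\<lambda>w. e w y) (at (\<chi> k. g k 0))"
  define V :: "real^'o" where "V = (\<chi> k. u k)"
  have Fd: "((\<lambda>w. e w y) has_derivative F) (at (\<chi> k. g k 0))"
    using ed by (simp add: F_def frechet_derivative_works)
  have lin: "linear F" using ed by (simp add: F_def linear_frechet_derivative)
  have vd: "((\<lambda>t. (\<chi> k. g k t)::real^'o) has_derivative (\<lambda>h. h *\<^sub>R V)) (at 0)"
    unfolding V_def by (rule vec_deriv[OF gd])
  have "((\<lambda>w. e w y) \<circ> (\<lambda>t. (\<chi> k. g k t)::real^'o) has_derivative F \<circ> (\<lambda>h. h *\<^sub>R V)) (at 0)"
    by (rule diff_chain_at[OF vd]) (use Fd in simp)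
  moreover have "F \<circ> (\<lambda>h. h *\<^sub>R V) = (*) (F V)"
    using lin by (auto simp: linear_scale mult.commute)
  ultimately have d: "((\<lambda>t. e (\<chi> k. g k t) y) has_real_derivative F V) (at 0)"
    by (simp add: has_field_derivative_def o_def)
  have "F V = F (\<Sum>k\<in>UNIV. (V$k) *\<^sub>R axis k 1)"
    using basis_expansion[of V] by (simp add: scalar_mult_eq_scaleR)
  also have "\<dots> = (\<Sum>k\<in>UNIV. V$k * F (axis k 1))"
    using lin by (simp add: linear_sum linear_scale)
  finally have FV: "F V = (\<Sum>k\<in>UNIV. u k * F (axis k 1))" by (simp add: V_def)
  have "\<bar>F V\<bar> \<le> (\<Sum>k\<in>UNIV. \<bar>u k\<bar> * \<bar>F (axis k 1)\<bar>)"
    unfolding FV by (rule order_trans[OF sum_abs]) (simp add: abs_mult)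
  also have "\<dots> \<le> (\<Sum>k\<in>(UNIV::'o set). U * c)"
    apply (rule sum_mono)
    apply (rule mult_mono)
    using ub eb[unfolded F_def[symmetric]] by (auto intro: order_trans[OF abs_ge_zero])
  finally have "\<bar>F V\<bar> \<le> real CARD('o) * (c * U)" by (simp add: mult.commute)
  with d show ?thesis by blast
qed

lemma sum_bound:
  fixes f g N :: "'a \<Rightarrow> real"
  assumes "\<And>i. i \<in> A \<Longrightarrow> \<bar>f i\<bar> \<le> X" "\<And>i. i \<in> A \<Longrightarrow> \<bar>g i\<bar> \<le> N i" "0 \<le> X"
  shows "\<bar>\<Sum>i\<in>A. f i * g i\<bar> \<le> X * (\<Sum>i\<in>A. N i)"
proof -
  have "\<bar>\<Sum>i\<in>A. f i * g i\<bar> \<le> (\<Sum>i\<in>A. \<bar>f i\<bar> * \<bar>g i\<bar>)"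
    by (rule order_trans[OF sum_abs]) (simp add: abs_mult)
  also have "\<dots> \<le> (\<Sum>i\<in>A. X * N i)"
    by (rule sum_mono, rule mult_mono) (use assms in auto)
  finally show ?thesis by (simp add: sum_distrib_left)
qed

fun Xb :: "(nat \<Rightarrow> real \<Rightarrow> real) \<Rightarrow> real \<Rightarrow> real \<Rightarrow> nat \<Rightarrow> real" where
  "Xb b1 X0 R 0 = X0"
| "Xb b1 X0 R (Suc m) = b1 (Suc m) (Xb b1 X0 R m * R) * (Xb b1 X0 R m * R)"

fun Kb :: "(nat \<Rightarrow> real \<Rightarrow> real) \<Rightarrow> (nat \<Rightarrow> real) \<Rightarrow> real \<Rightarrow> nat \<Rightarrow> real" where
  "Kb b2 X R 0 = 0"
| "Kb b2 X R (Suc m) = b2 (Suc m) (X m * R) * (Kb b2 X R m * R + 1)"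

lemma lo_bound:
  assumes x: "\<And>i. i < d 0 \<Longrightarrow> \<bar>x i\<bar> \<le> X0" and X0: "0 \<le> X0" and R: "0 \<le> R"
    and Wb: "\<And>m i k. m \<in> {1..L} \<Longrightarrow> \<bar>W m i k\<bar> \<le> N m i"
    and Nb: "\<And>m. m \<in> {1..L} \<Longrightarrow> (\<Sum>i<d (m-1). N m i) \<le> R"
    and Nn: "\<And>m i. 0 \<le> N m i"
    and b1n: "\<And>l S. l \<in> {1..L} \<Longrightarrow> 0 \<le> S \<Longrightarrow> 0 \<le> b1 l S"
    and sb1: "\<And>l S s. l \<in> {1..L} \<Longrightarrow> \<bar>s\<bar> \<le> S \<Longrightarrow> \<bar>\<sigma> l s\<bar> \<le> b1 l S * \<bar>s\<bar>"
  shows "m \<le> L \<Longrightarrow> (\<forall>i. \<bar>layer_out \<sigma> d W x m i\<bar> \<le> Xb b1 X0 R m) \<and> 0 \<le> Xb b1 X0 R m"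
proof (induction m)
  case 0
  then show ?case using x X0 by auto
next
  case (Suc m)
  let ?X = "Xb b1 X0 R m"
  have IH: "\<And>i. \<bar>layer_out \<sigma> d W x m i\<bar> \<le> ?X" "0 \<le> ?X" using Suc by auto
  have m1: "Suc m \<in> {1..L}" using Suc by auto
  have XR: "0 \<le> ?X * R" using IH R by simp
  have b1p: "0 \<le> b1 (Suc m) (?X * R)" using b1n[OF m1 XR] .
  have *: "\<bar>layer_out \<sigma> d W x (Suc m) k\<bar> \<le> b1 (Suc m) (?X * R) * (?X * R)" for k
  proof (cases "k < d (Suc m)")
    case True
    define z where "z = (\<Sum>i<d m. layer_out \<sigma> d W x m i * W (Suc m) i k)"
    have "\<bar>z\<bar> \<le> ?X * (\<Sum>i<d m. N (Suc m) i)"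
      unfolding z_def by (rule sum_bound) (use IH Wb[OF m1] in auto)
    also have "\<dots> \<le> ?X * R" using Nb[OF m1] IH by (intro mult_left_mono) auto
    finally have zb: "\<bar>z\<bar> \<le> ?X * R" .
    have "\<bar>\<sigma> (Suc m) z\<bar> \<le> b1 (Suc m) (?X * R) * \<bar>z\<bar>" by (rule sb1[OF m1 zb])
    also have "\<dots> \<le> b1 (Suc m) (?X * R) * (?X * R)" by (rule mult_left_mono[OF zb b1p])
    finally show ?thesis using True by (simp add: z_def)
  next
    case False
    then show ?thesis using b1p XR by simp
  qed
  then show ?case using b1p XR by simp
qed



lemma lo_deriv:
  fixes W W' :: weights
  assumes R: "0 \<le> R" and Xn: "\<And>m. m \<le> L \<Longrightarrow> 0 \<le> X m"
    and lob: "\<And>m i. m \<le> L \<Longrightarrow> \<bar>layer_out \<sigma> d W x m i\<bar> \<le> X m"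
    and Wb: "\<And>m i k. m \<in> {1..L} \<Longrightarrow> \<bar>W m i k\<bar> \<le> N m i"
    and Nb: "\<And>m. m \<in> {1..L} \<Longrightarrow> (\<Sum>i<d (m-1). N m i) \<le> R"
    and Nn: "\<And>m i. 0 \<le> N m i"
    and b2n: "\<And>l S. l \<in> {1..L} \<Longrightarrow> 0 \<le> S \<Longrightarrow> 0 \<le> b2 l S"
    and sb2: "\<And>l S s. l \<in> {1..L} \<Longrightarrow> \<bar>s\<bar> \<le> S \<Longrightarrow> \<bar>deriv (\<sigma> l) s\<bar> \<le> b2 l S"
    and sdiff: "\<And>l s. l \<in> {1..L} \<Longrightarrow> \<sigma> l differentiable (at s)"
    and pert: "\<And>m k. m \<in> {1..L} \<Longrightarrow>
                 \<bar>\<Sum>i<d (m-1). layer_out \<sigma> d W x (m-1) i * W' m i k\<bar> \<le> a"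
    and a: "0 \<le> a"
  shows "m \<le> L \<Longrightarrow> (\<forall>i. \<exists>u. ((\<lambda>t. layer_out \<sigma> d (\<lambda>l i k. W l i k + t * W' l i k) x m i)
              has_real_derivative u) (at 0) \<and> \<bar>u\<bar> \<le> a * Kb b2 X R m) \<and> 0 \<le> Kb b2 X R m"
proof (induction m)
  case 0
  show ?case by auto
next
  case (Suc m)
  let ?Wt = "\<lambda>t. (\<lambda>l i k. W l i k + t * W' l i k)"
  let ?K = "Kb b2 X R m"
  have W0: "?Wt 0 = W" by auto
  from Suc have IH: "\<forall>i. \<exists>u. ((\<lambda>t. layer_out \<sigma> d (?Wt t) x m i)
              has_real_derivative u) (at 0) \<and> \<bar>u\<bar> \<le> a * ?K" and K0: "0 \<le> ?K" by auto
  from choice[OF IH] obtain u where uu: "\<forall>i. ((\<lambda>t. layer_out \<sigma> d (?Wt t) x m i) has_real_derivative u i) (at 0)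
      \<and> \<bar>u i\<bar> \<le> a * ?K" by blast
  have u: "\<And>i. ((\<lambda>t. layer_out \<sigma> d (?Wt t) x m i) has_real_derivative u i) (at 0)"
      "\<And>i. \<bar>u i\<bar> \<le> a * ?K" using uu by auto
  have mL: "Suc m \<le> L" using Suc.prems .
  have m1: "Suc m \<in> {1..L}" using mL by simp
  have Xm: "0 \<le> X m" using Xn[of m] mL by simp
  have lobm: "\<And>i. \<bar>layer_out \<sigma> d W x m i\<bar> \<le> X m" using lob[of m] mL by simp
  have XR: "0 \<le> X m * R" using Xm R by simp
  have b2p: "0 \<le> b2 (Suc m) (X m * R)" using b2n[OF m1 XR] .
  have Kp: "0 \<le> Kb b2 X R (Suc m)" using b2p K0 R by simp
  have "\<exists>v. ((\<lambda>t. layer_out \<sigma> d (?Wt t) x (Suc m) k) has_real_derivative v) (at 0)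
              \<and> \<bar>v\<bar> \<le> a * Kb b2 X R (Suc m)" for k
  proof (cases "k < d (Suc m)")
    case False
    then have "(\<lambda>t. layer_out \<sigma> d (?Wt t) x (Suc m) k) = (\<lambda>t. 0)" by auto
    then show ?thesis using Kp a by (auto intro!: exI[of _ 0])
  next
    case True
    define zt where "zt = (\<lambda>t. \<Sum>i<d m. layer_out \<sigma> d (?Wt t) x m i * (W (Suc m) i k + t * W' (Suc m) i k))"
    define dz where "dz = (\<Sum>i<d m. u i * W (Suc m) i k + layer_out \<sigma> d W x m i * W' (Suc m) i k)"
    have fe: "(\<lambda>t. layer_out \<sigma> d (?Wt t) x (Suc m) k) = (\<lambda>t. \<sigma> (Suc m) (zt t))"
      using True by (auto simp: zt_def)
    have dzt: "(zt has_real_derivative dz) (at 0)"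
    proof -
      have "((\<lambda>t. layer_out \<sigma> d (?Wt t) x m i * (W (Suc m) i k + t * W' (Suc m) i k))
              has_real_derivative (u i * W (Suc m) i k + layer_out \<sigma> d W x m i * W' (Suc m) i k)) (at 0)" for i
      proof -
        have g: "((\<lambda>t. W (Suc m) i k + t * W' (Suc m) i k) has_real_derivative W' (Suc m) i k) (at 0)"
          by (auto intro!: derivative_eq_intros)
        show ?thesis using DERIV_mult[OF u(1)[of i] g] W0 by (simp add: mult.commute)
      qed
      then show ?thesis unfolding zt_def dz_def by (rule DERIV_sum)
    qed
    have z0: "zt 0 = (\<Sum>i<d m. layer_out \<sigma> d W x m i * W (Suc m) i k)"
      unfolding zt_def by (simp add: W0)
    have zb: "\<bar>zt 0\<bar> \<le> X m * R"
    proof -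
      have "\<bar>zt 0\<bar> \<le> X m * (\<Sum>i<d m. N (Suc m) i)"
        unfolding z0 by (rule sum_bound) (use lobm Wb[OF m1] Xm in auto)
      also have "\<dots> \<le> X m * R" using Nb[OF m1] Xm by (intro mult_left_mono) auto
      finally show ?thesis .
    qed
    have sd: "(\<sigma> (Suc m) has_real_derivative deriv (\<sigma> (Suc m)) (zt 0)) (at (zt 0))"
      using sdiff[OF m1] by (simp add: DERIV_deriv_iff_real_differentiable)
    have D: "((\<lambda>t. \<sigma> (Suc m) (zt t)) has_real_derivative deriv (\<sigma> (Suc m)) (zt 0) * dz) (at 0)"
      by (rule DERIV_chain2[OF sd dzt])
    have dzb: "\<bar>dz\<bar> \<le> a * ?K * R + a"
    proof -
      have "dz = (\<Sum>i<d m. u i * W (Suc m) i k) + (\<Sum>i<d m. layer_out \<sigma> d W x m i * W' (Suc m) i k)"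
        unfolding dz_def by (simp add: sum.distrib)
      moreover have "\<bar>\<Sum>i<d m. u i * W (Suc m) i k\<bar> \<le> a * ?K * R"
      proof -
        have "\<bar>\<Sum>i<d m. u i * W (Suc m) i k\<bar> \<le> a * ?K * (\<Sum>i<d m. N (Suc m) i)"
          by (rule sum_bound) (use u(2) Wb[OF m1] a K0 in auto)
        also have "\<dots> \<le> a * ?K * R" using Nb[OF m1] a K0 by (intro mult_left_mono) auto
        finally show ?thesis .
      qed
      moreover have "\<bar>\<Sum>i<d m. layer_out \<sigma> d W x m i * W' (Suc m) i k\<bar> \<le> a"
        using pert[OF m1, of k] by simp
      ultimately show ?thesis by linarith
    qed
    have "\<bar>deriv (\<sigma> (Suc m)) (zt 0) * dz\<bar> \<le> b2 (Suc m) (X m * R) * (a * ?K * R + a)"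
      unfolding abs_mult by (rule mult_mono[OF sb2[OF m1 zb] dzb b2p abs_ge_zero])
    also have "\<dots> = a * Kb b2 X R (Suc m)" by (simp add: algebra_simps)
    finally show ?thesis using D fe by auto
  qed
  then show ?case using Kp by blast
qed



lemma count_bound:
  fixes A :: "nat \<Rightarrow> nat \<Rightarrow> real"
  assumes p: "1 \<le> p" and lam: "0 < lam"
    and H: "\<And>j. j < n \<Longrightarrow> lam \<le> C * (\<Sum>i<m. \<bar>A i j\<bar>)"
    and RB: "(\<Sum>i<m. (\<Sum>j<n. \<bar>A i j\<bar> powr p) powr (1/p)) \<le> R"
  shows "real n \<le> (C * R / lam) powr p"
proof (cases "n = 0")
  case True then show ?thesis by simp
next
  case False
  have cs: "0 \<le> (\<Sum>i<m. \<bar>A i j\<bar>)" for j by (simp add: sum_nonneg)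
  have C: "0 < C"
  proof (rule ccontr)
    assume "\<not> 0 < C"
    then have "C * (\<Sum>i<m. \<bar>A i 0\<bar>) \<le> 0" using cs[of 0] by (simp add: mult_nonpos_nonneg)
    with H[of 0] False lam show False by simp
  qed
  have "lam * real n = (\<Sum>j<n. lam)" by simp
  also have "\<dots> \<le> (\<Sum>j<n. C * (\<Sum>i<m. \<bar>A i j\<bar>))" by (rule sum_mono) (use H in auto)
  also have "\<dots> = C * (\<Sum>i<m. \<Sum>j<n. \<bar>A i j\<bar>)" by (simp add: sum_distrib_left sum.swap[of _ "{..<n}"])
  also have "\<dots> \<le> C * (\<Sum>i<m. real n powr (1 - 1/p) * (\<Sum>j<n. \<bar>A i j\<bar> powr p) powr (1/p))"
    apply (rule mult_left_mono[OF sum_mono])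
    using powmean[OF _ _ p, of "{..<n}"] C by auto
  also have "\<dots> = C * real n powr (1 - 1/p) * (\<Sum>i<m. (\<Sum>j<n. \<bar>A i j\<bar> powr p) powr (1/p))"
    by (simp add: sum_distrib_left mult.assoc)
  also have "\<dots> \<le> C * real n powr (1 - 1/p) * R"
    by (rule mult_left_mono[OF RB]) (use C in simp)
  finally have a: "lam * real n \<le> C * real n powr (1 - 1/p) * R" .
  have n0: "0 < real n" using False by simp
  have nsplit: "real n = real n powr (1/p) * real n powr (1 - 1/p)"
    using n0 by (simp add: powr_add[symmetric])
  have pos: "0 < real n powr (1 - 1/p)" using n0 by simp
  have "lam * real n powr (1/p) * real n powr (1 - 1/p) \<le> (C * R) * real n powr (1 - 1/p)"
    using a nsplit by (simp add: algebra_simps)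
  then have "lam * real n powr (1/p) \<le> C * R" using pos by simp
  then have b: "real n powr (1/p) \<le> C * R / lam" using lam by (simp add: field_simps)
  have "real n = (real n powr (1/p)) powr p" using p n0 by (simp add: powr_powr)
  also have "\<dots> \<le> (C * R / lam) powr p" using b p by (intro powr_mono2) auto
  finally show ?thesis .
qed

lemma omega_scale:
  fixes W :: weights
  assumes t: "0 < 1 + t" and l: "Suc l \<in> {1..L}" and j: "j < d l" and p: "1 \<le> p"
  shows "Omega_out lam p L d (\<lambda>m i k. W m i k + t * (if m = Suc l \<and> i = j then W m i k else 0))
       = Omega_out lam p L d W + lam * t * row_pnorm p d W (Suc l) j"
proof -
  let ?Wt = "\<lambda>m i k. W m i k + t * (if m = Suc l \<and> i = j then W m i k else 0)"
  have rp: "row_pnorm p d ?Wt m i = row_pnorm p d W m i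
             + (if m = Suc l \<and> i = j then t * row_pnorm p d W m i else 0)" for m i
  proof (cases "m = Suc l \<and> i = j")
    case True
    have "(\<Sum>k<d m. \<bar>?Wt m i k\<bar> powr p) = (\<Sum>k<d m. (1 + t) powr p * \<bar>W m i k\<bar> powr p)"
    proof (intro sum.cong refl)
      fix k
      have "W m i k + t * W m i k = (1 + t) * W m i k" by (simp add: algebra_simps)
      then show "\<bar>?Wt m i k\<bar> powr p = (1 + t) powr p * \<bar>W m i k\<bar> powr p"
        using True t by (simp add: abs_mult powr_mult)
    qed
    also have "\<dots> = (1 + t) powr p * (\<Sum>k<d m. \<bar>W m i k\<bar> powr p)" by (simp add: sum_distrib_left)
    finally have "row_pnorm p d ?Wt m i = ((1 + t) powr p) powr (1/p) * row_pnorm p d W m i"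
      unfolding row_pnorm_def by (simp add: powr_mult sum_nonneg)
    also have "((1 + t) powr p) powr (1/p) = 1 + t" using t p by (simp add: powr_powr)
    finally show ?thesis using True by (simp add: algebra_simps)
  next
    case False
    then have e: "\<And>k. ?Wt m i k = W m i k" by auto
    have "row_pnorm p d ?Wt m i = row_pnorm p d W m i" unfolding row_pnorm_def e ..
    then show ?thesis using False by auto
  qed
  have "(\<Sum>m\<in>{1..L}. \<Sum>i<d (m - 1). row_pnorm p d ?Wt m i)
       = (\<Sum>m\<in>{1..L}. \<Sum>i<d (m - 1). row_pnorm p d W m i)
         + (\<Sum>m\<in>{1..L}. \<Sum>i<d (m - 1). (if m = Suc l \<and> i = j then t * row_pnorm p d W m i else 0))"
    by (simp add: rp sum.distrib)
  also have "(\<Sum>m\<in>{1..L}. \<Sum>i<d (m - 1). (if m = Suc l \<and> i = j then t * row_pnorm p d W m i else 0))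
      = (\<Sum>m\<in>{1..L}. (if m = Suc l then t * row_pnorm p d W (Suc l) j else 0))"
    using j by (intro sum.cong) (auto simp: sum.delta if_distrib cong: if_cong)
  also have "\<dots> = t * row_pnorm p d W (Suc l) j" using l by (simp add: sum.delta)
  finally show ?thesis unfolding Omega_out_def by (simp add: algebra_simps)
qed



lemma Kb_nonneg:
  assumes R: "0 \<le> R" and Xn: "\<And>m. m \<le> L \<Longrightarrow> 0 \<le> X m"
    and b2n: "\<And>l S. l \<in> {1..L} \<Longrightarrow> 0 \<le> S \<Longrightarrow> 0 \<le> b2 l S"
  shows "m \<le> L \<Longrightarrow> 0 \<le> Kb b2 X R m"
proof (induction m)
  case (Suc m)
  have "0 \<le> b2 (Suc m) (X m * R)" using b2n[of "Suc m" "X m * R"] Xn[of m] R Suc by auto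
  then show ?case using Suc R by simp
qed simp

lemma unit_bound:
  fixes \<sigma> :: "nat \<Rightarrow> real \<Rightarrow> real" and e :: "real^'o::finite \<Rightarrow> 'y \<Rightarrow> real"
    and D :: "((nat \<Rightarrow> real) \<times> 'y) set" and W :: weights
  assumes D: "finite D" and lam: "0 < lam" and p: "1 \<le> p"
    and lm: "is_local_min (E_obj \<sigma> e D lam p L) L d W"
    and R: "0 \<le> R"
    and Wb: "\<And>m i k. m \<in> {1..L} \<Longrightarrow> \<bar>W m i k\<bar> \<le> row_pnorm p d W m i"
    and Nb: "\<And>m. m \<in> {1..L} \<Longrightarrow> (\<Sum>i<d (m-1). row_pnorm p d W m i) \<le> R"
    and Nn: "\<And>m i. 0 \<le> row_pnorm p d W m i"
    and Xb: "\<And>q m i. q \<in> D \<Longrightarrow> m \<le> L \<Longrightarrow> \<bar>layer_out \<sigma> d W (fst q) m i\<bar> \<le> X m"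
    and Xn: "\<And>m. m \<le> L \<Longrightarrow> 0 \<le> X m"
    and b1n: "\<And>l S. l \<in> {1..L} \<Longrightarrow> 0 \<le> S \<Longrightarrow> 0 \<le> b1 l S"
    and b2n: "\<And>l S. l \<in> {1..L} \<Longrightarrow> 0 \<le> S \<Longrightarrow> 0 \<le> b2 l S"
    and sb1: "\<And>l S s. l \<in> {1..L} \<Longrightarrow> \<bar>s\<bar> \<le> S \<Longrightarrow> \<bar>\<sigma> l s\<bar> \<le> b1 l S * \<bar>s\<bar>"
    and sb2: "\<And>l S s. l \<in> {1..L} \<Longrightarrow> \<bar>s\<bar> \<le> S \<Longrightarrow> \<bar>deriv (\<sigma> l) s\<bar> \<le> b2 l S"
    and sdiff: "\<And>l s. l \<in> {1..L} \<Longrightarrow> \<sigma> l differentiable (at s)"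
    and ediff: "\<And>v y. (\<lambda>w. e w y) differentiable (at v)"
    and eb: "\<And>q k. q \<in> D \<Longrightarrow>
       \<bar>frechet_derivative (\<lambda>w. e w (snd q)) (at (net_out \<sigma> L d W (fst q))) (axis k 1)\<bar> \<le> c"
    and c: "0 \<le> c"
    and l: "l \<in> {1..L-1}" and j: "j < d l" and rho: "0 < row_pnorm p d W (Suc l) j"
  shows "lam \<le> real CARD('o) * (c * Kb b2 X R L) * (b1 l (X (l-1) * R) * X (l-1))
               * (\<Sum>i<d (l-1). \<bar>W l i j\<bar>)"
proof -
  define \<rho> where "\<rho> = row_pnorm p d W (Suc l) j"
  define K where "K = Kb b2 X R L"
  define Wt where "Wt = (\<lambda>t. (\<lambda>m i k. W m i k + t * (if m = Suc l \<and> i = j then W m i k else 0)))"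
  define cs where "cs = (\<Sum>i<d (l-1). \<bar>W l i j\<bar>)"
  define Bx where "Bx = b1 l (X (l-1) * R) * X (l-1)"
  have W0: "Wt 0 = W" by (auto simp: Wt_def)
  have lL: "Suc l \<in> {1..L}" "l \<in> {1..L}" using l by auto
  obtain l' where l': "l = Suc l'" using l by (cases l) auto
  have cs0: "0 \<le> cs" by (simp add: cs_def sum_nonneg)
  have xb: "\<bar>layer_out \<sigma> d W (fst q) l j\<bar> \<le> Bx * cs" if q: "q \<in> D" for q
  proof -
    define z where "z = (\<Sum>i<d l'. layer_out \<sigma> d W (fst q) l' i * W l i j)"
    have X0: "0 \<le> X l'" using Xn[of l'] l' lL by auto
    have lo: "\<And>i. \<bar>layer_out \<sigma> d W (fst q) l' i\<bar> \<le> X l'" using Xb[OF q, of l'] l' lL by auto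
    have z1: "\<bar>z\<bar> \<le> X l' * cs"
      unfolding z_def cs_def l' diff_Suc_1 by (rule sum_bound) (use lo X0 in auto)
    have "\<bar>z\<bar> \<le> X l' * (\<Sum>i<d l'. row_pnorm p d W l i)"
      unfolding z_def by (rule sum_bound) (use lo X0 Wb[OF lL(2)] in auto)
    also have "\<dots> \<le> X l' * R" using Nb[OF lL(2)] X0 l' by (intro mult_left_mono) auto
    finally have z2: "\<bar>z\<bar> \<le> X l' * R" .
    have b1p: "0 \<le> b1 l (X l' * R)" using b1n[OF lL(2)] X0 R by simp
    have "\<bar>layer_out \<sigma> d W (fst q) l j\<bar> = \<bar>\<sigma> l z\<bar>" using j by (simp add: l' z_def)
    also have "\<dots> \<le> b1 l (X l' * R) * \<bar>z\<bar>" by (rule sb1[OF lL(2) z2])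
    also have "\<dots> \<le> b1 l (X l' * R) * (X l' * cs)" by (rule mult_left_mono[OF z1 b1p])
    finally show ?thesis by (simp add: Bx_def l')
  qed
  have "\<exists>D'. ((\<lambda>t. e (net_out \<sigma> L d (Wt t) (fst q)) (snd q)) has_real_derivative D') (at 0)
             \<and> \<bar>D'\<bar> \<le> real CARD('o) * (c * ((\<bar>layer_out \<sigma> d W (fst q) l j\<bar> * \<rho>) * K))"
    if q: "q \<in> D" for q
  proof -
    let ?a = "\<bar>layer_out \<sigma> d W (fst q) l j\<bar> * \<rho>"
    have pert: "\<bar>\<Sum>i<d (m-1). layer_out \<sigma> d W (fst q) (m-1) i * (if m = Suc l \<and> i = j then W m i k else 0)\<bar> \<le> ?a"
      if m: "m \<in> {1..L}" for m k
    proof (cases "m = Suc l")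
      case True
      have "(\<Sum>i<d (m-1). layer_out \<sigma> d W (fst q) (m-1) i * (if m = Suc l \<and> i = j then W m i k else 0))
            = layer_out \<sigma> d W (fst q) l j * W (Suc l) j k"
        using True j by (simp add: if_distrib sum.delta cong: if_cong)
      also have "\<bar>\<dots>\<bar> \<le> ?a" unfolding abs_mult \<rho>_def
        by (rule mult_left_mono[OF Wb[OF lL(1)]]) simp
      finally show ?thesis .
    next
      case False then show ?thesis using rho by (simp add: \<rho>_def)
    qed
    have "L \<le> L" by simp
    from lo_deriv[of R L X \<sigma> d W "fst q" "row_pnorm p d W" b2 "\<lambda>m i k. if m = Suc l \<and> i = j then W m i k else 0" ?a,
        OF R Xn Xb[OF q] Wb Nb Nn b2n sb2 sdiff pert _ this]
    have "\<forall>i. \<exists>u. ((\<lambda>t. layer_out \<sigma> d (Wt t) (fst q) L i) has_real_derivative u) (at 0) \<and> \<bar>u\<bar> \<le> ?a * K"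
      using rho by (simp add: Wt_def K_def \<rho>_def)
    from choice[OF this] obtain u where uu: "\<forall>i. ((\<lambda>t. layer_out \<sigma> d (Wt t) (fst q) L i) has_real_derivative u i) (at 0)
        \<and> \<bar>u i\<bar> \<le> ?a * K" by blast
    have u: "\<And>i. ((\<lambda>t. layer_out \<sigma> d (Wt t) (fst q) L i) has_real_derivative u i) (at 0)"
        "\<And>i. \<bar>u i\<bar> \<le> ?a * K" using uu by auto
    have nv: "(\<chi> k. layer_out \<sigma> d (Wt 0) (fst q) L (enum_idx k)) = net_out \<sigma> L d W (fst q)"
      by (simp add: net_out_def W0)
    have "\<exists>D'. ((\<lambda>t. e (\<chi> k. layer_out \<sigma> d (Wt t) (fst q) L (enum_idx k)) (snd q)) has_real_derivative D') (at 0)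
             \<and> \<bar>D'\<bar> \<le> real CARD('o) * (c * (?a * K))"
      by (rule e_chain[where u="\<lambda>k. u (enum_idx k)"]) (use u ediff eb[OF q] nv in \<open>auto simp only: nv\<close>)
    then show ?thesis by (simp add: net_out_def)
  qed
  then have "\<forall>q\<in>D. \<exists>D'. ((\<lambda>t. e (net_out \<sigma> L d (Wt t) (fst q)) (snd q)) has_real_derivative D') (at 0)
             \<and> \<bar>D'\<bar> \<le> real CARD('o) * (c * ((\<bar>layer_out \<sigma> d W (fst q) l j\<bar> * \<rho>) * K))" by blast
  from bchoice[OF this] obtain Dq where DDq: "\<forall>q\<in>D. ((\<lambda>t. e (net_out \<sigma> L d (Wt t) (fst q)) (snd q)) has_real_derivative Dq q) (at 0)
             \<and> \<bar>Dq q\<bar> \<le> real CARD('o) * (c * ((\<bar>layer_out \<sigma> d W (fst q) l j\<bar> * \<rho>) * K))" by blast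
  have Dq: "\<And>q. q \<in> D \<Longrightarrow> ((\<lambda>t. e (net_out \<sigma> L d (Wt t) (fst q)) (snd q)) has_real_derivative Dq q) (at 0)"
      "\<And>q. q \<in> D \<Longrightarrow> \<bar>Dq q\<bar> \<le> real CARD('o) * (c * ((\<bar>layer_out \<sigma> d W (fst q) l j\<bar> * \<rho>) * K))"
    using DDq by auto
  define \<psi> where "\<psi> = (\<lambda>t. (\<Sum>q\<in>D. e (net_out \<sigma> L d (Wt t) (fst q)) (snd q)) / real (card D)
                        + Omega_out lam p L d W + lam * t * \<rho>)"
  have dpsi: "(\<psi> has_real_derivative (\<Sum>q\<in>D. Dq q) / real (card D) + lam * \<rho>) (at 0)"
  proof -
    have "((\<lambda>t. \<Sum>q\<in>D. e (net_out \<sigma> L d (Wt t) (fst q)) (snd q)) has_real_derivative (\<Sum>q\<in>D. Dq q)) (at 0)"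
      by (rule DERIV_sum) (use Dq(1) in auto)
    note l1 = DERIV_cdivide[OF this, of "real (card D)"]
    have l3: "((\<lambda>t. lam * t * \<rho>) has_real_derivative lam * \<rho>) (at 0)"
      by (auto intro!: derivative_eq_intros)
    show ?thesis unfolding \<psi>_def
      using DERIV_add[OF DERIV_add[OF l1 DERIV_const[of "Omega_out lam p L d W"]] l3] by simp
  qed
  have Eeq: "E_obj \<sigma> e D lam p L d (Wt t) = \<psi> t" if t: "\<bar>t\<bar> < 1" for t
  proof -
    have "Omega_out lam p L d (Wt t) = Omega_out lam p L d W + lam * t * \<rho>"
      unfolding Wt_def \<rho>_def by (rule omega_scale) (use t lL(1) j p in auto)
    then show ?thesis unfolding E_obj_def \<psi>_def by (simp add: case_prod_beta')
  qed
  obtain \<epsilon> where \<epsilon>: "0 < \<epsilon>" and lmin: "\<And>W'. valid_weights L d W' \<Longrightarrow> (\<forall>l i j. \<bar>W' l i j - W l i j\<bar> < \<epsilon>)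
                 \<Longrightarrow> E_obj \<sigma> e D lam p L d W \<le> E_obj \<sigma> e D lam p L d W'"
    using lm unfolding is_local_min_def by blast
  have valid: "valid_weights L d W" using lm by (simp add: is_local_min_def)
  have WR: "\<bar>W (Suc l) j k\<bar> \<le> R" for k
  proof -
    have "\<rho> \<le> (\<Sum>i<d (Suc l - 1). row_pnorm p d W (Suc l) i)"
      unfolding \<rho>_def by (rule member_le_sum) (use j Nn in auto)
    then show ?thesis using Wb[OF lL(1), of j k] Nb[OF lL(1)] by (simp add: \<rho>_def)
  qed
  define \<delta> where "\<delta> = min 1 (\<epsilon> / (R + 1))"
  have \<delta>: "0 < \<delta>" using \<epsilon> R by (simp add: \<delta>_def)
  have "\<psi> 0 \<le> \<psi> t" if t: "\<bar>0 - t\<bar> < \<delta>" for t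
  proof -
    have t1: "\<bar>t\<bar> < 1" using t by (simp add: \<delta>_def)
    have t2: "\<bar>t\<bar> * (R + 1) < \<epsilon>" using t R by (simp add: \<delta>_def field_simps)
    have v: "valid_weights L d (Wt t)"
      unfolding valid_weights_def
    proof (intro allI impI)
      fix m i k assume "Wt t m i k \<noteq> 0"
      then have "W m i k \<noteq> 0" by (auto simp: Wt_def split: if_splits)
      then show "1 \<le> m \<and> m \<le> L \<and> i < d (m - 1) \<and> k < d m" using valid unfolding valid_weights_def by blast
    qed
    have cl: "\<bar>Wt t m i k - W m i k\<bar> < \<epsilon>" for m i k
    proof (cases "m = Suc l \<and> i = j")
      case True
      have "\<bar>Wt t m i k - W m i k\<bar> = \<bar>t\<bar> * \<bar>W (Suc l) j k\<bar>" using True by (simp add: Wt_def abs_mult)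
      also have "\<dots> \<le> \<bar>t\<bar> * (R + 1)" using WR[of k] by (intro mult_left_mono) auto
      finally show ?thesis using t2 by simp
    next
      case False
      then have "Wt t m i k = W m i k" unfolding Wt_def by auto
      then show ?thesis using \<epsilon> by simp
    qed
    have "\<psi> 0 = E_obj \<sigma> e D lam p L d W" using Eeq[of 0] W0 by simp
    also have "\<dots> \<le> E_obj \<sigma> e D lam p L d (Wt t)" using lmin[OF v] cl by blast
    also have "\<dots> = \<psi> t" by (rule Eeq[OF t1])
    finally show ?thesis .
  qed
  then have crit: "(\<Sum>q\<in>D. Dq q) / real (card D) + lam * \<rho> = 0"
    using DERIV_local_min[OF dpsi \<delta>] by blast
  have rp: "0 < \<rho>" using rho by (simp add: \<rho>_def)
  have K0: "0 \<le> K" using Kb_nonneg[OF R Xn b2n, of L] by (simp add: K_def)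
  have Dne: "D \<noteq> {}"
  proof
    assume "D = {}"
    with crit have "lam * \<rho> = 0" by simp
    with lam rp show False by simp
  qed
  have cD: "0 < real (card D)" using Dne D by (simp add: card_gt_0_iff)
  have "\<bar>\<Sum>q\<in>D. Dq q\<bar> \<le> (\<Sum>q\<in>D. \<bar>Dq q\<bar>)" by (rule sum_abs)
  also have "\<dots> \<le> (\<Sum>q\<in>D. real CARD('o) * (c * ((Bx * cs * \<rho>) * K)))"
  proof (rule sum_mono)
    fix q assume q: "q \<in> D"
    have "\<bar>layer_out \<sigma> d W (fst q) l j\<bar> * \<rho> * K \<le> Bx * cs * \<rho> * K"
      using xb[OF q] rp K0 by (intro mult_right_mono) auto
    then have "real CARD('o) * (c * ((\<bar>layer_out \<sigma> d W (fst q) l j\<bar> * \<rho>) * K))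
               \<le> real CARD('o) * (c * ((Bx * cs * \<rho>) * K))"
      using c by (intro mult_left_mono) auto
    then show "\<bar>Dq q\<bar> \<le> real CARD('o) * (c * ((Bx * cs * \<rho>) * K))" using Dq(2)[OF q] by linarith
  qed
  also have "\<dots> = real (card D) * (real CARD('o) * (c * ((Bx * cs * \<rho>) * K)))" by simp
  finally have s: "\<bar>\<Sum>q\<in>D. Dq q\<bar> \<le> real (card D) * (real CARD('o) * (c * ((Bx * cs * \<rho>) * K)))" .
  have "lam * \<rho> = - (\<Sum>q\<in>D. Dq q) / real (card D)" using crit by simp
  also have "\<dots> \<le> \<bar>\<Sum>q\<in>D. Dq q\<bar> / real (card D)" using cD by (intro divide_right_mono) auto
  also have "\<dots> \<le> real CARD('o) * (c * ((Bx * cs * \<rho>) * K))" using s cD by (simp add: divide_le_eq mult.commute)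
  finally have "lam * \<rho> \<le> (real CARD('o) * (c * K) * Bx * cs) * \<rho>" by (simp add: algebra_simps)
  then have "lam \<le> real CARD('o) * (c * K) * Bx * cs" using rp by simp
  then show ?thesis by (simp add: K_def Bx_def cs_def)
qed



theorem lemma3:
  fixes L d0 :: nat
    and \<sigma> :: "nat \<Rightarrow> real \<Rightarrow> real"
    and b1 b2 :: "nat \<Rightarrow> real \<Rightarrow> real"
    and e :: "real^'o::finite \<Rightarrow> 'y \<Rightarrow> real"
    and b3 :: "real \<Rightarrow> real"
    and D :: "((nat \<Rightarrow> real) \<times> 'y) set"
    and lam p B :: real
  assumes L: "1 \<le> L"
    and D: "finite D"
    and sigma_diff: "\<And>l s. l \<in> {1..L} \<Longrightarrow> \<sigma> l differentiable (at s)"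
    and b_nonneg: "\<And>l S. l \<in> {1..L} \<Longrightarrow> 0 \<le> S \<Longrightarrow> 0 \<le> b1 l S \<and> 0 \<le> b2 l S"
    and sigma_b1: "\<And>l S s. l \<in> {1..L} \<Longrightarrow> \<bar>s\<bar> \<le> S \<Longrightarrow> \<bar>\<sigma> l s\<bar> \<le> b1 l S * \<bar>s\<bar>"
    and sigma_b2: "\<And>l S s. l \<in> {1..L} \<Longrightarrow> \<bar>s\<bar> \<le> S \<Longrightarrow> \<bar>deriv (\<sigma> l) s\<bar> \<le> b2 l S"
    and e_nonneg: "\<And>v y. 0 \<le> e v y"
    and e_diff: "\<And>v y. (\<lambda>w. e w y) differentiable (at v)"
    and b3_nonneg: "\<And>S. 0 \<le> S \<Longrightarrow> 0 \<le> b3 S"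
    and e_b3: "\<And>v y S k. e v y \<le> S \<Longrightarrow>
                 \<bar>frechet_derivative (\<lambda>w. e w y) (at v) (axis k 1)\<bar> \<le> b3 S"
    and lam: "0 < lam"
    and p: "1 \<le> p"
  shows "\<exists>M. \<forall>d. d 0 = d0 \<and> d L = CARD('o) \<and>
                (\<exists>W. proper_B_local_min (E_obj \<sigma> e D lam p L) B L d W)
             \<longrightarrow> (\<forall>l\<in>{1..L-1}. d l \<le> M)"
proof -
  define R where "R = B / lam"
  define X0 where "X0 = (\<Sum>q\<in>D. \<Sum>i<d0. \<bar>fst q i\<bar>)"
  define X where "X = Xb b1 X0 R"
  define S where "S = real (card D) * B"
  define c where "c = b3 S"
  define C where "C = (\<lambda>l. real CARD('o) * (c * Kb b2 X R L) * (b1 l (X (l-1) * R) * X (l-1)))"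
  define M where "M = (\<Sum>l\<in>{1..L-1}. nat \<lceil>(C l * R / lam) powr p\<rceil>)"
  have b1n: "\<And>l S. l \<in> {1..L} \<Longrightarrow> 0 \<le> S \<Longrightarrow> 0 \<le> b1 l S" using b_nonneg by blast
  have b2n: "\<And>l S. l \<in> {1..L} \<Longrightarrow> 0 \<le> S \<Longrightarrow> 0 \<le> b2 l S" using b_nonneg by blast
  have X00: "0 \<le> X0" unfolding X0_def by (intro sum_nonneg) auto
  show ?thesis
  proof (intro exI[of _ M] allI impI ballI)
    fix d :: "nat \<Rightarrow> nat" and l
    assume H: "d 0 = d0 \<and> d L = CARD('o) \<and> (\<exists>W. proper_B_local_min (E_obj \<sigma> e D lam p L) B L d W)"
      and l: "l \<in> {1..L-1}"
    then obtain W where W: "proper_B_local_min (E_obj \<sigma> e D lam p L) B L d W" and d0: "d 0 = d0" by blast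
    have lm: "is_local_min (E_obj \<sigma> e D lam p L) L d W" and EB: "E_obj \<sigma> e D lam p L d W \<le> B"
      and pr: "is_proper L d W" using W by (auto simp: proper_B_local_min_def)
    have valid: "valid_weights L d W" using lm by (simp add: is_local_min_def)
    let ?N = "row_pnorm p d W"
    have Nn: "\<And>m i. 0 \<le> ?N m i" by (simp add: row_pnorm_def)
    define dat where "dat = (\<Sum>(x, y)\<in>D. e (net_out \<sigma> L d W x) y) / real (card D)"
    define T where "T = (\<Sum>m\<in>{1..L}. \<Sum>i<d (m - 1). ?N m i)"
    have dat0: "0 \<le> dat" unfolding dat_def by (intro divide_nonneg_nonneg sum_nonneg) (auto simp: e_nonneg)
    have T0: "0 \<le> T" unfolding T_def by (intro sum_nonneg) (simp add: Nn)
    have Eq: "E_obj \<sigma> e D lam p L d W = dat + lam * T"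
      by (simp add: E_obj_def Omega_out_def dat_def T_def)
    have lT: "0 \<le> lam * T" using T0 lam by simp
    have B0: "0 \<le> B" using EB Eq dat0 lT by linarith
    have R0: "0 \<le> R" using B0 lam by (simp add: R_def)
    have TR: "T \<le> R" using EB Eq dat0 lam by (simp add: R_def field_simps)
    have datB: "dat \<le> B" using EB Eq lT by linarith
    have Nb: "\<And>m. m \<in> {1..L} \<Longrightarrow> (\<Sum>i<d (m-1). ?N m i) \<le> R"
    proof -
      fix m assume m: "m \<in> {1..L}"
      have "(\<Sum>i<d (m-1). ?N m i) \<le> T" unfolding T_def
        by (rule member_le_sum[of m]) (use m in \<open>auto intro: sum_nonneg simp: Nn\<close>)
      then show "(\<Sum>i<d (m-1). ?N m i) \<le> R" using TR by simp
    qed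
    have Wb: "\<And>m i k. m \<in> {1..L} \<Longrightarrow> \<bar>W m i k\<bar> \<le> ?N m i"
    proof -
      fix m i k assume m: "m \<in> {1..L}"
      show "\<bar>W m i k\<bar> \<le> ?N m i"
      proof (cases "W m i k = 0")
        case True then show ?thesis by (simp add: Nn)
      next
        case False
        then have k: "k < d m" using valid by (auto simp: valid_weights_def)
        have "\<bar>W m i k\<bar> = (\<bar>W m i k\<bar> powr p) powr (1/p)" using p by (simp add: powr_powr)
        also have "\<dots> \<le> ?N m i" unfolding row_pnorm_def
          by (intro powr_mono2 member_le_sum) (use p k in auto)
        finally show ?thesis .
      qed
    qed
    have xb: "\<And>q i. q \<in> D \<Longrightarrow> i < d 0 \<Longrightarrow> \<bar>fst q i\<bar> \<le> X0"
    proof -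
      fix q i assume q: "q \<in> D" and i: "i < d 0"
      have "\<bar>fst q i\<bar> \<le> (\<Sum>i<d0. \<bar>fst q i\<bar>)" by (rule member_le_sum) (use i d0 in auto)
      also have "\<dots> \<le> X0" unfolding X0_def by (rule member_le_sum[OF q]) (auto intro: sum_nonneg D)
      finally show "\<bar>fst q i\<bar> \<le> X0" .
    qed
    have Xb: "\<And>q m i. q \<in> D \<Longrightarrow> m \<le> L \<Longrightarrow> \<bar>layer_out \<sigma> d W (fst q) m i\<bar> \<le> X m"
    proof -
      fix q m i assume q: "q \<in> D" and m: "m \<le> L"
      have "\<And>i. i < d 0 \<Longrightarrow> \<bar>fst q i\<bar> \<le> X0" using xb[OF q] .
      from lo_bound[of d "fst q" X0 R L W ?N b1 \<sigma> m, OF this X00 R0 Wb Nb Nn b1n sigma_b1 m]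
      show "\<bar>layer_out \<sigma> d W (fst q) m i\<bar> \<le> X m" unfolding X_def by blast
    qed
    have Xn: "\<And>m. m \<le> L \<Longrightarrow> 0 \<le> X m"
      using lo_bound[of d "\<lambda>_. 0" X0 R L W ?N b1 \<sigma>, OF _ X00 R0 Wb Nb Nn b1n sigma_b1] X00
      unfolding X_def by auto
    have S0: "0 \<le> S" using B0 by (simp add: S_def)
    have c0: "0 \<le> c" using b3_nonneg[OF S0] by (simp add: c_def)
    have eb: "\<And>q k. q \<in> D \<Longrightarrow>
       \<bar>frechet_derivative (\<lambda>w. e w (snd q)) (at (net_out \<sigma> L d W (fst q))) (axis k 1)\<bar> \<le> c"
    proof -
      fix q k assume q: "q \<in> D"
      have cD: "0 < real (card D)" using q D by (auto simp: card_gt_0_iff)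
      have "e (net_out \<sigma> L d W (fst q)) (snd q) \<le> (\<Sum>(x, y)\<in>D. e (net_out \<sigma> L d W x) y)"
        using member_le_sum[OF q, of "\<lambda>(x, y). e (net_out \<sigma> L d W x) y"] D e_nonneg
        by (auto simp: case_prod_beta')
      also have "\<dots> = real (card D) * dat" using cD by (simp add: dat_def)
      also have "\<dots> \<le> S" unfolding S_def using datB cD by (intro mult_left_mono) auto
      finally show "\<bar>frechet_derivative (\<lambda>w. e w (snd q)) (at (net_out \<sigma> L d W (fst q))) (axis k 1)\<bar> \<le> c"
        unfolding c_def by (rule e_b3)
    qed
    have l0: "l \<in> {0..L}" using l by auto
    have pd: "d l = card {j. j < d l \<and> \<not> zero_fan_in d W l j \<and> \<not> zero_fan_out d W l j}"
    proof -
      have "d l = proper_dim L d W l" using pr l0 unfolding is_proper_def by blast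
      moreover have "1 \<le> l \<and> l \<le> L - 1" using l by auto
      ultimately show ?thesis unfolding proper_dim_def by presburger
    qed
    have allj: "{j. j < d l \<and> \<not> zero_fan_in d W l j \<and> \<not> zero_fan_out d W l j} = {..<d l}"
      by (rule card_subset_eq) (use pd in auto)
    have unit: "lam \<le> C l * (\<Sum>i<d (l-1). \<bar>W l i j\<bar>)" if j: "j < d l" for j
    proof -
      have "\<not> zero_fan_out d W l j" using allj j by blast
      then obtain k where k: "k < d (Suc l)" "W (Suc l) j k \<noteq> 0"
        by (auto simp: zero_fan_out_def)
      have "0 < (\<Sum>k<d (Suc l). \<bar>W (Suc l) j k\<bar> powr p)"
        by (rule sum_pos2[of _ k]) (use k in auto)
      then have rho: "0 < ?N (Suc l) j" by (simp add: row_pnorm_def)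
      show ?thesis
        using unit_bound[OF D lam p lm R0 Wb Nb Nn Xb Xn b1n b2n sigma_b1 sigma_b2 sigma_diff e_diff eb c0 l j rho]
        by (simp add: C_def)
    qed
    have lL: "l \<in> {1..L}" using l by auto
    have "real (d l) \<le> (C l * R / lam) powr p"
      by (rule count_bound[OF p lam unit]) (use Nb[OF lL] in \<open>auto simp: row_pnorm_def\<close>)
    moreover have "(C l * R / lam) powr p \<le> of_int \<lceil>(C l * R / lam) powr p\<rceil>" by (rule le_of_int_ceiling)
    moreover have c0: "0 \<le> \<lceil>(C l * R / lam) powr p\<rceil>"
    proof -
      have "0 \<le> (C l * R / lam) powr p" by simp
      also have "\<dots> \<le> real_of_int \<lceil>(C l * R / lam) powr p\<rceil>" by (rule le_of_int_ceiling)
      finally show ?thesis by simp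
    qed
    moreover have "real (nat \<lceil>(C l * R / lam) powr p\<rceil>) = real_of_int \<lceil>(C l * R / lam) powr p\<rceil>"
      using c0 by (rule of_nat_nat)
    ultimately have "real (d l) \<le> real (nat \<lceil>(C l * R / lam) powr p\<rceil>)"
      by linarith
    then have "d l \<le> nat \<lceil>(C l * R / lam) powr p\<rceil>" by linarith
    also have "\<dots> \<le> M" unfolding M_def by (rule member_le_sum[OF l]) auto
    finally show "d l \<le> M" .
  qed
qed

end
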